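(* Let $\pi_1,\pi_2,\pi_3$ be Borel probability measures on $[0,\infty)$ such that $\mu=\pi_1\times\pi_2\times\pi_3$ satisfies $R\mu=\mu$, where $R(r,s,t)=(t+[r-s]^+,\,t+[s-r]^+,\,r\wedge s)$. Let $S$ be a finite hexagonal domain, and generate the flow field $\eta$ on $\mathbb{E}(\bar S)$ from the following independent families: - inputs on the ascending incoming edges, i.i.d. with law $\pi_1$; - inputs on the descending incoming edges, i.i.d. with law $\pi_2$; - births $(\xi_y)_{y\in S}$, i.i.d. with law $\pi_3$. Then the family of outputs $(\eta(e))$, over all outgoing edges $e$ of $S$, consists of independent random variables. Moreover $\eta(e)$ has law $\pi_1$ for every ascending outgoing edge $e$, and law $\pi_2$ for every descending outgoing edge $e$.
   Context: Lattice and edges. $\tilde{\mathbb{Z}}^2=\{(t,x)\in\mathbb{Z}^2:t+x\text{ even}\}$; edges join points at Euclidean distance $\sqrt2$. For $y=(t,x)$ write - $e^\nearrow_y=\langle(t,x),(t+1,x+1)\rangle$, - $e^\searrow_y=\langle(t,x),(t+1,x-1)\rangle$, - $e^\swarrow_y=\langle(t-1,x-1),(t,x)\rangle$, - $e^\nwarrow_y=\langle(t-1,x+1),(t,x)\rangle$. Hexagonal domain. A finite hexagonal domain is a set $S=\{(t,x)\in\tilde{\mathbb{Z}}^2: t_0\le t\le t_1,\ x_{t,-}\le x\le x_{t,+}\}$ where: - $t_0<t_1$ are integers; - $x_{t,-}\le x_{t,+}$ are integers with $t+x_{t,\pm}$ even; - for some $t^\pm_{01}\in[t_0,t_1]$ one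 has $x_{t+1,\pm}-x_{t,\pm}=\pm1$ for $t_0\le t<t^\pm_{01}$, and $x_{t+1,\pm}-x_{t,\pm}=\mp1$ for $t^\pm_{01}\le t<t_1$. Associated sets and edge types. $\bar S$ is $S$ together with all lattice points joined by an edge to a point of $S$, and $\mathbb{E}(\bar S)$ is the set of edges with an endpoint in $S$. - An incoming edge is $\langle y',y\rangle$ with $y\in S$, $y'\notin S$, $t(y')=t(y)-1$. It is ascending if it is $e^\swarrow_y$ and descending if it is $e^\nwarrow_y$. - An outgoing edge is $\langle y,y'\rangle$ with $y\in S$, $y'\notin S$, $t(y')=t(y)+1$. It is ascending if it is $e^\nearrow_y$ and descending if it is $e^\searrow_y$. Generated flow field. Defined recursively in increasing $t$: for $y\in S$, with $\zeta^+_y=\eta(e^\swarrow_y)$ and $\zeta^-_y=\eta(e^\nwarrow_y)$ (inputs or previously defined values), set $$\eta(e^\nearrow_y)=\xi_y+[\zeta^+_y-\zeta^-_y]^+,\qquad \eta(e^\searrow_y)=\xi_y+[\zeta^-_y-\zeta^+_y]^+.$$ *)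

theory Defs
  imports "HOL-Probability.Probability"
begin

text \<open>Lattice points are pairs (t, x) of integers; an edge is represented by the pair
  (lower endpoint, upper endpoint), the lower endpoint having time coordinate one less.\<close>

type_synonym point = "int \<times> int"
type_synonym edge = "point \<times> point"

definition hexagonal_domain :: "point set \<Rightarrow> bool" where
  "hexagonal_domain S \<longleftrightarrow>
     (\<exists>(t0::int) (t1::int) (xm::int \<Rightarrow> int) (xp::int \<Rightarrow> int) (tm::int) (tp::int).
        t0 < t1 \<and> t0 \<le> tm \<and> tm \<le> t1 \<and> t0 \<le> tp \<and> tp \<le> t1 \<and>
        (\<forall>t. t0 \<le> t \<and> t \<le> t1 \<longrightarrow> xm t \<le> xp t \<and> even (t + xm t) \<and> even (t + xp t)) \<and>
        (\<forall>t. t0 \<le> t \<and> t < tp \<longrightarrow> xp (t + 1) - xp t = 1) \<and>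
        (\<forall>t. tp \<le> t \<and> t < t1 \<longrightarrow> xp (t + 1) - xp t = -1) \<and>
        (\<forall>t. t0 \<le> t \<and> t < tm \<longrightarrow> xm (t + 1) - xm t = -1) \<and>
        (\<forall>t. tm \<le> t \<and> t < t1 \<longrightarrow> xm (t + 1) - xm t = 1) \<and>
        S = {(t, x). t0 \<le> t \<and> t \<le> t1 \<and> xm t \<le> x \<and> x \<le> xp t \<and> even (t + x)})"

definition incoming_asc :: "point set \<Rightarrow> edge set" where
  "incoming_asc S = {((t - 1, x - 1), (t, x)) | t x. (t, x) \<in> S \<and> (t - 1, x - 1) \<notin> S}"

definition incoming_desc :: "point set \<Rightarrow> edge set" where
  "incoming_desc S = {((t - 1, x + 1), (t, x)) | t x. (t, x) \<in> S \<and> (t - 1, x + 1) \<notin> S}"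

definition outgoing_asc :: "point set \<Rightarrow> edge set" where
  "outgoing_asc S = {((t, x), (t + 1, x + 1)) | t x. (t, x) \<in> S \<and> (t + 1, x + 1) \<notin> S}"

definition outgoing_desc :: "point set \<Rightarrow> edge set" where
  "outgoing_desc S = {((t, x), (t + 1, x - 1)) | t x. (t, x) \<in> S \<and> (t + 1, x - 1) \<notin> S}"

definition incoming :: "point set \<Rightarrow> edge set" where
  "incoming S = incoming_asc S \<union> incoming_desc S"

definition outgoing :: "point set \<Rightarrow> edge set" where
  "outgoing S = outgoing_asc S \<union> outgoing_desc S"

text \<open>The natural
  number argument is a recursion depth (fuel); an edge whose lower endpoint is not in S is
  an incoming edge and takes the input value.\<close>

fun flow_gen :: "point set \<Rightarrow> (edge \<Rightarrow> real) \<Rightarrow> (point \<Rightarrow> real) \<Rightarrow> nat \<Rightarrow> edge \<Rightarrow> real" where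
  "flow_gen S inp xi 0 e = inp e"
| "flow_gen S inp xi (Suc n) e =
     (let (t, x) = fst e in
      if (t, x) \<in> S then
        (let zp = flow_gen S inp xi n ((t - 1, x - 1), (t, x));
             zm = flow_gen S inp xi n ((t - 1, x + 1), (t, x))
         in if snd e = (t + 1, x + 1) then xi (t, x) + max 0 (zp - zm)
            else if snd e = (t + 1, x - 1) then xi (t, x) + max 0 (zm - zp)
            else 0)
      else inp e)"

text \<open>Since every descending chain of points of S has length at most card S, recursion
  depth card S suffices for a finite domain S.\<close>

definition flow_field :: "point set \<Rightarrow> (edge \<Rightarrow> real) \<Rightarrow> (point \<Rightarrow> real) \<Rightarrow> edge \<Rightarrow> real" where
  "flow_field S inp xi = flow_gen S inp xi (card S)"

definition Rmap :: "real \<times> real \<times> real \<Rightarrow> real \<times> real \<times> real" where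
  "Rmap = (\<lambda>(r, s, t). (t + max 0 (r - s), t + max 0 (s - r), min r s))"

end

theory Submission
  imports Defs
begin


lemma Rmap_meas: "Rmap \<in> borel \<Otimes>\<^sub>M (borel \<Otimes>\<^sub>M borel) \<rightarrow>\<^sub>M (borel::real measure) \<Otimes>\<^sub>M ((borel::real measure) \<Otimes>\<^sub>M (borel::real measure))"
  unfolding Rmap_def by measurable

lemma (in prob_space) step:
  fixes Z Z' :: "'i \<Rightarrow> 'a \<Rightarrow> real"
  assumes p1: "prob_space \<pi>1" and p2: "prob_space \<pi>2" and p3: "prob_space \<pi>3"
    and s1: "sets \<pi>1 = sets borel" and s2: "sets \<pi>2 = sets borel" and s3: "sets \<pi>3 = sets borel"
    and R: "distr (\<pi>1 \<Otimes>\<^sub>M (\<pi>2 \<Otimes>\<^sub>M \<pi>3)) (\<pi>1 \<Otimes>\<^sub>M (\<pi>2 \<Otimes>\<^sub>M \<pi>3)) Rmap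
           = \<pi>1 \<Otimes>\<^sub>M (\<pi>2 \<Otimes>\<^sub>M \<pi>3)"
    and ind: "indep_vars (\<lambda>_. borel) Z I"
    and fin: "finite I"
    and abc: "a \<in> I" "b \<in> I" "c \<in> I" "a \<noteq> b" "a \<noteq> c" "b \<noteq> c"
    and new: "a' \<notin> I - {a,b,c}" "b' \<notin> I - {a,b,c}" "a' \<noteq> b'"
    and la: "distr M borel (Z a) = \<pi>1" and lb: "distr M borel (Z b) = \<pi>2" and lc: "distr M borel (Z c) = \<pi>3"
    and Z0: "\<And>i. i \<in> I - {a,b,c} \<Longrightarrow> Z' i = Z i"
    and Za: "Z' a' = (\<lambda>\<omega>. Z c \<omega> + max 0 (Z a \<omega> - Z b \<omega>))"
    and Zb: "Z' b' = (\<lambda>\<omega>. Z c \<omega> + max 0 (Z b \<omega> - Z a \<omega>))"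
  shows "indep_vars (\<lambda>_. borel) Z' (I - {a,b,c} \<union> {a',b'}) \<and> distr M borel (Z' a') = \<pi>1 \<and> distr M borel (Z' b') = \<pi>2"
proof -
  interpret P1: prob_space \<pi>1 by fact
  interpret P2: prob_space \<pi>2 by fact
  interpret P3: prob_space \<pi>3 by fact
  interpret P23: prob_space "\<pi>2 \<Otimes>\<^sub>M \<pi>3" by (simp add: P2.prob_space_axioms P3.prob_space_axioms prob_space_pair)
  define I0 where "I0 = I - {a,b,c}"
  define \<mu> where "\<mu> = \<pi>1 \<Otimes>\<^sub>M (\<pi>2 \<Otimes>\<^sub>M \<pi>3)"
  define L where "L = (borel::real measure) \<Otimes>\<^sub>M ((borel::real measure) \<Otimes>\<^sub>M (borel::real measure))"
  define W where "W = (\<lambda>\<omega>. (Z a \<omega>, (Z b \<omega>, Z c \<omega>)))"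
  have rvZ: "\<And>i. i \<in> I \<Longrightarrow> random_variable borel (Z i)"
    using ind unfolding indep_vars_def by auto
  have sL: "sets \<mu> = sets L" unfolding \<mu>_def L_def
    by (intro sets_pair_measure_cong s1 s2 s3)
  have ibc: "indep_var borel (Z b) borel (Z c)"
  proof -
    have "indep_var (PiM {b} (\<lambda>_. borel)) (\<lambda>\<omega>. restrict (\<lambda>i. Z i \<omega>) {b}) (PiM {c} (\<lambda>_. borel)) (\<lambda>\<omega>. restrict (\<lambda>i. Z i \<omega>) {c})"
      using abc by (intro indep_var_restrict[OF ind]) auto
    from indep_var_compose[OF this, of "\<lambda>v. v b" borel "\<lambda>v. v c" borel]
    show ?thesis by (simp add: comp_def)
  qed
  define Ua where "Ua = (\<lambda>\<omega>. restrict (\<lambda>i. Z i \<omega>) {a})"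
  define Ubc where "Ubc = (\<lambda>\<omega>. restrict (\<lambda>i. Z i \<omega>) {b,c})"
  have iabc: "indep_var (PiM {a} (\<lambda>_. borel)) Ua (PiM {b,c} (\<lambda>_. borel)) Ubc"
    unfolding Ua_def Ubc_def using abc by (intro indep_var_restrict[OF ind]) auto
  have Uam: "Ua \<in> M \<rightarrow>\<^sub>M PiM {a} (\<lambda>_. borel)" using iabc indep_var_rv1 by blast
  have Ubcm: "Ubc \<in> M \<rightarrow>\<^sub>M PiM {b,c} (\<lambda>_. borel)" using iabc indep_var_rv2 by blast
  have hm: "(\<lambda>(x::'i\<Rightarrow>real, y::'i\<Rightarrow>real). (x a, (y b, y c))) \<in> PiM {a} (\<lambda>_. borel) \<Otimes>\<^sub>M PiM {b,c} (\<lambda>_. borel) \<rightarrow>\<^sub>M L"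
    unfolding L_def by measurable
  have ea: "(\<lambda>x::'i\<Rightarrow>real. x a) \<in> PiM {a} (\<lambda>_. borel) \<rightarrow>\<^sub>M borel" by measurable
  have ebc: "(\<lambda>y::'i\<Rightarrow>real. (y b, y c)) \<in> PiM {b,c} (\<lambda>_. borel) \<rightarrow>\<^sub>M borel \<Otimes>\<^sub>M borel" by measurable
  have dW: "distr M L W = \<mu>"
  proof -
    have "distr M L W = distr (distr M (PiM {a} (\<lambda>_. borel) \<Otimes>\<^sub>M PiM {b,c} (\<lambda>_. borel)) (\<lambda>\<omega>. (Ua \<omega>, Ubc \<omega>))) L (\<lambda>(x, y). (x a, (y b, y c)))"
      using Uam Ubcm hm by (subst distr_distr) (auto simp: W_def Ua_def Ubc_def comp_def)
    also have "\<dots> = distr (distr M (PiM {a} (\<lambda>_. borel)) Ua \<Otimes>\<^sub>M distr M (PiM {b,c} (\<lambda>_. borel)) Ubc) L (\<lambda>(x, y). (x a, (y b, y c)))"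
      using iabc[unfolded indep_var_distribution_eq] by simp
    also have "\<dots> = distr (distr M (PiM {a} (\<lambda>_. borel)) Ua) borel (\<lambda>x. x a) \<Otimes>\<^sub>M distr (distr M (PiM {b,c} (\<lambda>_. borel)) Ubc) (borel \<Otimes>\<^sub>M borel) (\<lambda>y. (y b, y c))"
    proof -
      have sf: "sigma_finite_measure (distr (distr M (Pi\<^sub>M {b, c} (\<lambda>_. borel)) Ubc) (borel \<Otimes>\<^sub>M borel) (\<lambda>y. (y b, y c)))"
        by (intro prob_space_imp_sigma_finite prob_space.prob_space_distr[OF prob_space_distr[OF Ubcm]]) (simp add: ebc cong: measurable_cong_sets)
      have ea': "(\<lambda>x::'i\<Rightarrow>real. x a) \<in> distr M (PiM {a} (\<lambda>_. borel)) Ua \<rightarrow>\<^sub>M borel"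
        by (simp add: ea cong: measurable_cong_sets)
      have ebc': "(\<lambda>y::'i\<Rightarrow>real. (y b, y c)) \<in> distr M (PiM {b,c} (\<lambda>_. borel)) Ubc \<rightarrow>\<^sub>M borel \<Otimes>\<^sub>M borel"
        by (simp add: ebc cong: measurable_cong_sets)
      show ?thesis unfolding L_def by (subst pair_measure_distr[OF ea' ebc' sf]) simp
    qed
    also have "\<dots> = distr M borel (Z a) \<Otimes>\<^sub>M distr M (borel \<Otimes>\<^sub>M borel) (\<lambda>\<omega>. (Z b \<omega>, Z c \<omega>))"
      using Uam Ubcm ea ebc by (simp add: distr_distr comp_def Ua_def Ubc_def)
    also have "\<dots> = \<pi>1 \<Otimes>\<^sub>M (\<pi>2 \<Otimes>\<^sub>M \<pi>3)"
      using ibc[unfolded indep_var_distribution_eq] la lb lc by simp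
    finally show ?thesis unfolding \<mu>_def .
  qed
  have Wm: "W \<in> M \<rightarrow>\<^sub>M L" unfolding W_def L_def using rvZ abc by measurable
  have dRW: "distr M L (Rmap \<circ> W) = \<mu>"
  proof -
    have "distr M L (Rmap \<circ> W) = distr (distr M L W) L Rmap"
      using Rmap_meas Wm unfolding L_def by (simp add: distr_distr)
    also have "\<dots> = distr \<mu> \<mu> Rmap" using dW sL by (intro distr_cong) auto
    also have "\<dots> = \<mu>" using R unfolding \<mu>_def .
    finally show ?thesis .
  qed
  have RWm: "Rmap \<circ> W \<in> M \<rightarrow>\<^sub>M L" using Rmap_meas Wm unfolding L_def by (rule measurable_comp[rotated])
  have Za_eq: "Z' a' = (\<lambda>\<omega>. fst ((Rmap \<circ> W) \<omega>))" unfolding Za Rmap_def W_def by auto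
  have Zb_eq: "Z' b' = (\<lambda>\<omega>. fst (snd ((Rmap \<circ> W) \<omega>)))" unfolding Zb Rmap_def W_def by auto
  have la': "distr M borel (Z' a') = \<pi>1"
  proof -
    have "distr M borel (Z' a') = distr (distr M L (Rmap \<circ> W)) borel fst"
      unfolding Za_eq using RWm by (subst distr_distr) (auto simp: L_def comp_def)
    also have "\<dots> = distr \<mu> \<pi>1 fst" using dRW s1 by (intro distr_cong) auto
    also have "\<dots> = \<pi>1" unfolding \<mu>_def by (rule P23.distr_pair_fst)
    finally show ?thesis .
  qed
  have sp1: "space \<pi>1 = UNIV" using sets_eq_imp_space_eq[OF s1] by simp
  have sp2: "space \<pi>2 = UNIV" using sets_eq_imp_space_eq[OF s2] by simp
  have sp3: "space \<pi>3 = UNIV" using sets_eq_imp_space_eq[OF s3] by simp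
  have emu: "emeasure \<mu> (A \<times> (B \<times> C)) = emeasure \<pi>1 A * (emeasure \<pi>2 B * emeasure \<pi>3 C)"
    if "A \<in> sets borel" "B \<in> sets borel" "C \<in> sets borel" for A B C
  proof -
    have "B \<times> C \<in> sets (\<pi>2 \<Otimes>\<^sub>M \<pi>3)" using that s2 s3 by (intro pair_measureI) auto
    then show ?thesis unfolding \<mu>_def using that s1 s2 s3
      by (simp add: P23.emeasure_pair_measure_Times P3.emeasure_pair_measure_Times)
  qed
  have eRW: "emeasure M ((Rmap \<circ> W) -` X \<inter> space M) = emeasure \<mu> X" if "X \<in> sets L" for X
    by (subst dRW[symmetric]) (simp add: emeasure_distr RWm that)
  have lb': "distr M borel (Z' b') = \<pi>2"
  proof (rule measure_eqI)
    show "sets (distr M borel (Z' b')) = sets \<pi>2" using s2 by simp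
    fix A assume A: "A \<in> sets (distr M borel (Z' b'))"
    then have Ab: "A \<in> sets borel" by simp
    have Zbm: "Z' b' \<in> borel_measurable M" unfolding Zb using rvZ abc by measurable
    have "emeasure (distr M borel (Z' b')) A = emeasure M (Z' b' -` A \<inter> space M)"
      using Zbm Ab by (simp add: emeasure_distr)
    also have "Z' b' -` A \<inter> space M = (Rmap \<circ> W) -` (UNIV \<times> (A \<times> UNIV)) \<inter> space M"
      by (auto simp: Zb Rmap_def W_def)
    also have "emeasure M \<dots> = emeasure \<mu> (UNIV \<times> (A \<times> UNIV))"
      using Ab by (intro eRW) (auto simp: L_def)
    also have "\<dots> = emeasure \<pi>2 A" using Ab emu[of UNIV A UNIV]
      by (simp add: P1.emeasure_space_1[unfolded sp1] P3.emeasure_space_1[unfolded sp3])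
    finally show "emeasure (distr M borel (Z' b')) A = emeasure \<pi>2 A" .
  qed
  have ea': "emeasure M (Z' a' -` A \<inter> space M) = emeasure \<pi>1 A" if "A \<in> sets borel" for A
  proof -
    have "Z' a' \<in> borel_measurable M" unfolding Za using rvZ abc by measurable
    then have "emeasure M (Z' a' -` A \<inter> space M) = emeasure (distr M borel (Z' a')) A"
      using that by (simp add: emeasure_distr)
    then show ?thesis using la' by simp
  qed
  have eb': "emeasure M (Z' b' -` A \<inter> space M) = emeasure \<pi>2 A" if "A \<in> sets borel" for A
  proof -
    have "Z' b' \<in> borel_measurable M" unfolding Zb using rvZ abc by measurable
    then have "emeasure M (Z' b' -` A \<inter> space M) = emeasure (distr M borel (Z' b')) A"
      using that by (simp add: emeasure_distr)
    then show ?thesis using lb' by simp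
  qed
  define I' where "I' = I0 \<union> {a',b'}"
  define V where "V = (\<lambda>\<omega>. restrict (\<lambda>i. Z i \<omega>) {a,b,c})"
  define U where "U = (\<lambda>\<omega>. restrict (\<lambda>i. Z i \<omega>) I0)"
  define g where "g = (\<lambda>v::'i\<Rightarrow>real. (v c + max 0 (v a - v b), v c + max 0 (v b - v a)))"
  have fin0: "finite I0" using fin unfolding I0_def by simp
  have iVU: "indep_var (PiM {a,b,c} (\<lambda>_. borel)) V (PiM I0 (\<lambda>_. borel)) U"
    unfolding V_def U_def I0_def using abc by (intro indep_var_restrict[OF ind]) auto
  have gm: "g \<in> PiM {a,b,c} (\<lambda>_. borel) \<rightarrow>\<^sub>M borel \<Otimes>\<^sub>M borel" unfolding g_def by measurable
  have PV: "g (V \<omega>) = (Z' a' \<omega>, Z' b' \<omega>)" for \<omega> unfolding g_def V_def Za Zb by simp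
  have rv': "random_variable borel (Z' i)" if iI: "i \<in> I'" for i
  proof -
    consider "i \<in> I0" | "i = a'" | "i = b'" using iI unfolding I'_def by auto
    then show ?thesis
    proof cases
      case 1 then show ?thesis using Z0 rvZ unfolding I0_def by auto
    next
      case 2
      have "random_variable borel (Z' a')" unfolding Za using rvZ abc by measurable
      then show ?thesis using 2 by simp
    next
      case 3
      have "random_variable borel (Z' b')" unfolding Zb using rvZ abc by measurable
      then show ?thesis using 3 by simp
    qed
  qed
  have a'0: "a' \<notin> I0" and b'0: "b' \<notin> I0" using new unfolding I0_def by auto
  have indep: "indep_vars (\<lambda>_. borel) Z' I'"
  proof (subst indep_vars_finite[where E="\<lambda>_. sets borel"])
    show "I' \<noteq> {}" "finite I'" using fin0 unfolding I'_def by auto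
    show "\<And>i. i \<in> I' \<Longrightarrow> sets (borel::real measure) = sigma_sets (space (borel::real measure)) (sets borel)" using sets.sigma_sets_eq[of "borel::real measure", symmetric] by simp
    show "\<And>i. i \<in> I' \<Longrightarrow> random_variable borel (Z' i)" by (rule rv')
    show "\<And>i. i \<in> I' \<Longrightarrow> Int_stable (sets (borel::real measure))" by (simp add: sets.Int_stable)
    show "\<And>i. i \<in> I' \<Longrightarrow> space (borel::real measure) \<in> sets borel" by simp
    show "\<And>i. i \<in> I' \<Longrightarrow> sets (borel::real measure) \<subseteq> Pow (space borel)" using sets.space_closed by blast
    show "\<forall>A\<in>(\<Pi> i\<in>I'. sets (borel::real measure)). prob (\<Inter>j\<in>I'. Z' j -` A j \<inter> space M) = (\<Prod>j\<in>I'. prob (Z' j -` A j \<inter> space M))"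
    proof
      fix A assume A: "A \<in> (\<Pi> i\<in>I'. sets (borel::real measure))"
      have Aa: "A a' \<in> sets borel" and Ab: "A b' \<in> sets borel" using A unfolding I'_def by auto
      have A0: "\<And>j. j \<in> I0 \<Longrightarrow> A j \<in> sets borel" using A unfolding I'_def by auto
      define G where "G = g -` (A a' \<times> A b') \<inter> space (PiM {a,b,c} (\<lambda>_. borel::real measure))"
      have Gs: "G \<in> sets (PiM {a,b,c} (\<lambda>_. borel))" unfolding G_def
        using Aa Ab by (intro measurable_sets[OF gm]) auto
      have Hs: "PiE I0 A \<in> sets (PiM I0 (\<lambda>_. borel))"
        using A0 fin0 by (intro sets_PiM_I_finite) auto
      have Z0': "\<And>j. j \<in> I0 \<Longrightarrow> Z' j = Z j" using Z0 unfolding I0_def by blast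
      have Vsp: "V \<omega> \<in> space (PiM {a,b,c} (\<lambda>_. borel::real measure))" for \<omega>
        by (simp add: V_def space_PiM)
      have eq1: "(\<Inter>j\<in>I'. Z' j -` A j \<inter> space M) = (\<lambda>x. (V x, U x)) -` (G \<times> PiE I0 A) \<inter> space M"
      proof (rule set_eqI)
        fix \<omega>
        have "\<omega> \<in> (\<Inter>j\<in>I'. Z' j -` A j \<inter> space M) \<longleftrightarrow> \<omega> \<in> space M \<and> Z' a' \<omega> \<in> A a' \<and> Z' b' \<omega> \<in> A b' \<and> (\<forall>j\<in>I0. Z j \<omega> \<in> A j)"
          unfolding I'_def using Z0' by auto
        moreover have "\<omega> \<in> (\<lambda>x. (V x, U x)) -` (G \<times> PiE I0 A) \<inter> space M \<longleftrightarrow> \<omega> \<in> space M \<and> Z' a' \<omega> \<in> A a' \<and> Z' b' \<omega> \<in> A b' \<and> (\<forall>j\<in>I0. Z j \<omega> \<in> A j)"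
          unfolding G_def using Vsp[of \<omega>] PV[of \<omega>] by (auto simp: U_def restrict_PiE_iff)
        ultimately show "\<omega> \<in> (\<Inter>j\<in>I'. Z' j -` A j \<inter> space M) \<longleftrightarrow> \<omega> \<in> (\<lambda>x. (V x, U x)) -` (G \<times> PiE I0 A) \<inter> space M" by simp
      qed
      have "prob (\<Inter>j\<in>I'. Z' j -` A j \<inter> space M) = prob (V -` G \<inter> space M) * prob (U -` PiE I0 A \<inter> space M)"
        unfolding eq1 using iVU Gs Hs by (rule indep_varD)
      also have "V -` G \<inter> space M = (Rmap \<circ> W) -` (A a' \<times> (A b' \<times> UNIV)) \<inter> space M"
        unfolding G_def using Vsp PV by (auto simp: Rmap_def W_def Za Zb)
      also have "prob \<dots> = prob (Z' a' -` A a' \<inter> space M) * prob (Z' b' -` A b' \<inter> space M)"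
      proof -
        have "emeasure M ((Rmap \<circ> W) -` (A a' \<times> (A b' \<times> UNIV)) \<inter> space M) = emeasure \<pi>1 (A a') * emeasure \<pi>2 (A b')"
          using Aa Ab emu[of "A a'" "A b'" UNIV] eRW[of "A a' \<times> (A b' \<times> UNIV)"]
          by (simp add: L_def P3.emeasure_space_1[unfolded sp3])
        then show ?thesis using ea'[OF Aa] eb'[OF Ab] by (simp add: measure_def enn2real_mult)
      qed
      also have "prob (U -` PiE I0 A \<inter> space M) = (\<Prod>j\<in>I0. prob (Z' j -` A j \<inter> space M))"
      proof (cases "I0 = {}")
        case True
        then have "U -` PiE I0 A \<inter> space M = space M" by (auto simp: U_def restrict_def)
        then show ?thesis using True by (simp add: prob_space)
      next
        case False
        have "U -` PiE I0 A \<inter> space M = (\<Inter>j\<in>I0. Z j -` A j \<inter> space M)"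
          using False by (auto simp: U_def restrict_PiE_iff)
        moreover have "prob (\<Inter>j\<in>I0. Z j -` A j \<inter> space M) = (\<Prod>j\<in>I0. prob (Z j -` A j \<inter> space M))"
          using False fin0 A0 by (intro indep_varsD[OF ind]) (auto simp: I0_def)
        moreover have "(\<Prod>j\<in>I0. prob (Z j -` A j \<inter> space M)) = (\<Prod>j\<in>I0. prob (Z' j -` A j \<inter> space M))"
          using Z0 unfolding I0_def by (intro prod.cong) auto
        ultimately show ?thesis by simp
      qed
      also have "prob (Z' a' -` A a' \<inter> space M) * prob (Z' b' -` A b' \<inter> space M) * (\<Prod>j\<in>I0. prob (Z' j -` A j \<inter> space M))
          = (\<Prod>j\<in>I'. prob (Z' j -` A j \<inter> space M))"
        unfolding I'_def using fin0 a'0 b'0 new(3) by (simp add: prod.insert mult.assoc)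
      finally show "prob (\<Inter>j\<in>I'. Z' j -` A j \<inter> space M) = (\<Prod>j\<in>I'. prob (Z' j -` A j \<inter> space M))" .
    qed
  qed
  show ?thesis using indep la' lb' unfolding I'_def I0_def by simp
qed



lemma hex_props:
  assumes "hexagonal_domain S"
  shows "finite S" "\<exists>t0 t1. (\<forall>p\<in>S. t0 \<le> fst p \<and> fst p \<le> t1) \<and> t1 - t0 < int (card S)"
proof -
  obtain t0 t1 xm xp tm tp where h: "t0 < t1" "\<forall>t. t0 \<le> t \<and> t \<le> t1 \<longrightarrow> xm t \<le> xp t \<and> even (t + xm t) \<and> even (t + xp t)"
     "S = {(t, x). t0 \<le> t \<and> t \<le> t1 \<and> xm t \<le> x \<and> x \<le> xp t \<and> even (t + x)}"
    using assms unfolding hexagonal_domain_def by blast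
  have sub: "S \<subseteq> (\<Union>t\<in>{t0..t1}. {t} \<times> {xm t..xp t})" using h(3) by auto
  show fin: "finite S" by (rule finite_subset[OF sub]) auto
  have inj: "inj_on (\<lambda>t. (t, xm t)) {t0..t1}" by (auto simp: inj_on_def)
  have img: "(\<lambda>t. (t, xm t)) ` {t0..t1} \<subseteq> S" using h(2,3) by auto
  have "card {t0..t1} \<le> card S" using card_inj_on_le[OF inj img fin] .
  then have "t1 - t0 < int (card S)" using h(1) by simp
  moreover have "\<forall>p\<in>S. t0 \<le> fst p \<and> fst p \<le> t1" using h(3) by auto
  ultimately show "\<exists>t0 t1. (\<forall>p\<in>S. t0 \<le> fst p \<and> fst p \<le> t1) \<and> t1 - t0 < int (card S)" by blast
qed

lemma flow_gen_fuel:
  assumes "\<forall>p\<in>S. t0 \<le> fst p"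
  shows "fst (fst e) - t0 < int n \<Longrightarrow> flow_gen S inp xi (Suc n) e = flow_gen S inp xi n e"
proof (induction n arbitrary: e)
  case 0
  obtain t x v where e: "e = ((t,x),v)" by (metis prod.collapse)
  have "(t,x) \<notin> S" using 0 assms e by force
  then show ?case by (simp add: e)
next
  case (Suc n)
  obtain t x v where e: "e = ((t,x),v)" by (metis prod.collapse)
  have IH1: "flow_gen S inp xi (Suc n) ((t - 1, x - 1), (t, x)) = flow_gen S inp xi n ((t - 1, x - 1), (t, x))"
    using Suc e by (intro Suc.IH) auto
  have IH2: "flow_gen S inp xi (Suc n) ((t - 1, x + 1), (t, x)) = flow_gen S inp xi n ((t - 1, x + 1), (t, x))"
    using Suc e by (intro Suc.IH) auto
  show ?case unfolding e
    by (simp only: flow_gen.simps(2)[of S inp xi "Suc n" "((t,x),v)"] flow_gen.simps(2)[of S inp xi n "((t,x),v)"] fst_conv prod.case Let_def IH1 IH2)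
qed

lemma flow_gen_fuel_mono:
  assumes "\<forall>p\<in>S. t0 \<le> fst p" "fst (fst e) - t0 < int n"
  shows "flow_gen S inp xi (n + k) e = flow_gen S inp xi n e"
proof (induction k)
  case 0 then show ?case by simp
next
  case (Suc k)
  have "flow_gen S inp xi (Suc (n + k)) e = flow_gen S inp xi (n + k) e"
    using assms by (intro flow_gen_fuel) auto
  then show ?case using Suc by simp
qed

lemma flow_field_out:
  assumes "fst e \<notin> S"
  shows "flow_field S inp xi e = inp e"
proof (cases "card S")
  case 0 then show ?thesis by (simp add: flow_field_def)
next
  case (Suc k)
  obtain t x v where e: "e = ((t,x),v)" by (metis prod.collapse)
  show ?thesis using assms by (simp add: flow_field_def Suc e)
qed

lemma flow_field_rec:
  assumes "hexagonal_domain S" "(t,x) \<in> S"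
  shows "flow_field S inp xi ((t,x),(t+1,x+1)) = xi (t,x) +
           max 0 (flow_field S inp xi ((t-1,x-1),(t,x)) - flow_field S inp xi ((t-1,x+1),(t,x)))"
    and "flow_field S inp xi ((t,x),(t+1,x-1)) = xi (t,x) +
           max 0 (flow_field S inp xi ((t-1,x+1),(t,x)) - flow_field S inp xi ((t-1,x-1),(t,x)))"
proof -
  have fin: "finite S" using hex_props[OF assms(1)] by simp
  obtain t0 t1 where tt: "\<forall>p\<in>S. t0 \<le> fst p \<and> fst p \<le> t1" "t1 - t0 < int (card S)"
    using hex_props[OF assms(1)] by blast
  obtain k where k: "card S = Suc k" using fin assms(2) by (metis card_0_eq empty_iff not0_implies_Suc)
  have tle: "t \<le> t1" "t0 \<le> t" using tt assms(2) by auto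
  have f1: "flow_gen S inp xi (Suc k) ((t-1,x-1),(t,x)) = flow_gen S inp xi k ((t-1,x-1),(t,x))"
    using tt tle k by (intro flow_gen_fuel) auto
  have f2: "flow_gen S inp xi (Suc k) ((t-1,x+1),(t,x)) = flow_gen S inp xi k ((t-1,x+1),(t,x))"
    using tt tle k by (intro flow_gen_fuel) auto
  show "flow_field S inp xi ((t,x),(t+1,x+1)) = xi (t,x) +
           max 0 (flow_field S inp xi ((t-1,x-1),(t,x)) - flow_field S inp xi ((t-1,x+1),(t,x)))"
    unfolding flow_field_def k f1 f2 using assms(2) by simp
  show "flow_field S inp xi ((t,x),(t+1,x-1)) = xi (t,x) +
           max 0 (flow_field S inp xi ((t-1,x+1),(t,x)) - flow_field S inp xi ((t-1,x-1),(t,x)))"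
    unfolding flow_field_def k f1 f2 using assms(2) by simp
qed




definition front :: "point set \<Rightarrow> point set \<Rightarrow> edge set" where
  "front S P = {(u,v). (v = (fst u + 1, snd u + 1) \<or> v = (fst u + 1, snd u - 1)) \<and>
      ((u \<notin> S \<and> v \<in> S \<and> v \<notin> P) \<or> (u \<in> P \<and> v \<notin> P))}"

definition idx :: "point set \<Rightarrow> point set \<Rightarrow> (edge + point) set" where
  "idx S P = Inl ` front S P \<union> Inr ` (S - P)"

definition dc :: "point set \<Rightarrow> point set \<Rightarrow> bool" where
  "dc S P \<longleftrightarrow> P \<subseteq> S \<and> (\<forall>t x. (t,x) \<in> P \<longrightarrow> ((t-1,x-1) \<in> S \<longrightarrow> (t-1,x-1) \<in> P) \<and> ((t-1,x+1) \<in> S \<longrightarrow> (t-1,x+1) \<in> P))"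

definition asc :: "edge \<Rightarrow> bool" where
  "asc e \<longleftrightarrow> snd e = (fst (fst e) + 1, snd (fst e) + 1)"

lemma front_empty: "front S {} = incoming S"
  unfolding front_def incoming_def incoming_asc_def incoming_desc_def
  by (auto; force)

lemma front_full: "front S S = outgoing S"
  unfolding front_def outgoing_def outgoing_asc_def outgoing_desc_def
  by (auto; force)

lemma incoming_asc_iff: "e \<in> incoming S \<Longrightarrow> asc e \<Longrightarrow> e \<in> incoming_asc S"
  unfolding incoming_def incoming_asc_def incoming_desc_def asc_def by auto

lemma incoming_desc_iff: "e \<in> incoming S \<Longrightarrow> \<not> asc e \<Longrightarrow> e \<in> incoming_desc S"
  unfolding incoming_def incoming_asc_def incoming_desc_def asc_def by auto

lemma outgoing_asc_front: "e \<in> outgoing_asc S \<Longrightarrow> e \<in> front S S \<and> asc e"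
  unfolding front_full outgoing_def outgoing_asc_def asc_def by auto

lemma outgoing_desc_front: "e \<in> outgoing_desc S \<Longrightarrow> e \<in> front S S \<and> \<not> asc e"
  unfolding front_full outgoing_def outgoing_desc_def asc_def by auto

lemma front_finite: "finite S \<Longrightarrow> P \<subseteq> S \<Longrightarrow> finite (front S P)"
proof -
  assume fin: "finite S" and PS: "P \<subseteq> S"
  have "front S P \<subseteq> (\<lambda>u. (u, (fst u+1, snd u+1))) ` S \<union> (\<lambda>u. (u, (fst u+1, snd u-1))) ` S
     \<union> (\<lambda>v. ((fst v - 1, snd v - 1), v)) ` S \<union> (\<lambda>v. ((fst v - 1, snd v + 1), v)) ` S"
    using PS unfolding front_def by (auto simp: image_iff)
  then show ?thesis by (rule finite_subset) (simp add: fin)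
qed

lemma idx_finite: "finite S \<Longrightarrow> P \<subseteq> S \<Longrightarrow> finite (idx S P)"
  unfolding idx_def using front_finite by auto

lemma front_step:
  assumes PS: "P \<subseteq> S" and y: "(t,x) \<in> S" "(t,x) \<notin> P"
    and pa: "(t-1,x-1) \<in> S \<Longrightarrow> (t-1,x-1) \<in> P" and pb: "(t-1,x+1) \<in> S \<Longrightarrow> (t-1,x+1) \<in> P"
    and na: "(t+1,x+1) \<notin> P" and nb: "(t+1,x-1) \<notin> P"
  shows "((t-1,x-1),(t,x)) \<in> front S P" "((t-1,x+1),(t,x)) \<in> front S P"
    "((t,x),(t+1,x+1)) \<notin> front S P" "((t,x),(t+1,x-1)) \<notin> front S P"
    "front S (insert (t,x) P) = (front S P - {((t-1,x-1),(t,x)), ((t-1,x+1),(t,x))}) \<union> {((t,x),(t+1,x+1)), ((t,x),(t+1,x-1))}"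
proof -
  show "((t-1,x-1),(t,x)) \<in> front S P" "((t-1,x+1),(t,x)) \<in> front S P"
    using y pa pb unfolding front_def by auto
  show "((t,x),(t+1,x+1)) \<notin> front S P" "((t,x),(t+1,x-1)) \<notin> front S P"
    using y unfolding front_def by auto
  show "front S (insert (t,x) P) = (front S P - {((t-1,x-1),(t,x)), ((t-1,x+1),(t,x))}) \<union> {((t,x),(t+1,x+1)), ((t,x),(t+1,x-1))}"
    using y pa pb na nb PS unfolding front_def by (auto; force)
qed




lemma (in prob_space) indep_vars_Inl:
  fixes X :: "('i + 'j) \<Rightarrow> 'a \<Rightarrow> real"
  assumes ind: "indep_vars (\<lambda>_. borel) X (Inl ` J)" and fin: "finite J"
  shows "indep_vars (\<lambda>_. borel) (\<lambda>e. X (Inl e)) J"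
proof (cases "J = {}")
  case True
  then show ?thesis by (simp add: indep_vars_def indep_sets_def)
next
  case False
  have rv: "\<And>i. i \<in> J \<Longrightarrow> random_variable borel (X (Inl i))"
    using ind unfolding indep_vars_def by auto
  show ?thesis
  proof (subst indep_vars_finite[where E="\<lambda>_. sets borel"])
    show "J \<noteq> {}" "finite J" using False fin by auto
    show "\<And>i. i \<in> J \<Longrightarrow> sets (borel::real measure) = sigma_sets (space (borel::real measure)) (sets borel)" using sets.sigma_sets_eq[of "borel::real measure", symmetric] by simp
    show "\<And>i. i \<in> J \<Longrightarrow> random_variable borel (X (Inl i))" by (rule rv)
    show "\<And>i. i \<in> J \<Longrightarrow> Int_stable (sets (borel::real measure))" by (simp add: sets.Int_stable)
    show "\<And>i. i \<in> J \<Longrightarrow> space (borel::real measure) \<in> sets borel" by simp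
    show "\<And>i. i \<in> J \<Longrightarrow> sets (borel::real measure) \<subseteq> Pow (space borel)" using sets.space_closed by blast
    show "\<forall>A\<in>(\<Pi> i\<in>J. sets (borel::real measure)). prob (\<Inter>j\<in>J. X (Inl j) -` A j \<inter> space M) = (\<Prod>j\<in>J. prob (X (Inl j) -` A j \<inter> space M))"
    proof
      fix A assume A: "A \<in> (\<Pi> i\<in>J. sets (borel::real measure))"
      define A' where "A' = (\<lambda>i::'i+'j. case i of Inl e \<Rightarrow> A e | Inr _ \<Rightarrow> UNIV)"
      have "prob (\<Inter>i\<in>Inl ` J. X i -` A' i \<inter> space M) = (\<Prod>i\<in>Inl ` J. prob (X i -` A' i \<inter> space M))"
        using A False fin by (intro indep_varsD_finite[OF ind]) (auto simp: A'_def)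
      then show "prob (\<Inter>j\<in>J. X (Inl j) -` A j \<inter> space M) = (\<Prod>j\<in>J. prob (X (Inl j) -` A j \<inter> space M))"
        using False by (simp add: A'_def prod.reindex image_image)
    qed
  qed
qed




theorem mainTheorem3:
  fixes \<pi>1 \<pi>2 \<pi>3 :: "real measure"
    and M :: "'a measure"
    and S :: "point set"
    and inp :: "edge \<Rightarrow> 'a \<Rightarrow> real"
    and xi :: "point \<Rightarrow> 'a \<Rightarrow> real"
  assumes "prob_space \<pi>1" "prob_space \<pi>2" "prob_space \<pi>3"
    and "sets \<pi>1 = sets borel" "sets \<pi>2 = sets borel" "sets \<pi>3 = sets borel"
    and "emeasure \<pi>1 {0..} = 1" "emeasure \<pi>2 {0..} = 1" "emeasure \<pi>3 {0..} = 1"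
    and "distr (\<pi>1 \<Otimes>\<^sub>M (\<pi>2 \<Otimes>\<^sub>M \<pi>3)) (\<pi>1 \<Otimes>\<^sub>M (\<pi>2 \<Otimes>\<^sub>M \<pi>3)) Rmap
           = \<pi>1 \<Otimes>\<^sub>M (\<pi>2 \<Otimes>\<^sub>M \<pi>3)"
    and "hexagonal_domain S"
    and "prob_space M"
    and "prob_space.indep_vars M (\<lambda>_. borel)
           (\<lambda>i. case i of Inl e \<Rightarrow> inp e | Inr y \<Rightarrow> xi y)
           (Inl ` incoming S \<union> Inr ` S)"
    and "\<forall>e \<in> incoming_asc S. distr M borel (inp e) = \<pi>1"
    and "\<forall>e \<in> incoming_desc S. distr M borel (inp e) = \<pi>2"
    and "\<forall>y \<in> S. distr M borel (xi y) = \<pi>3"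
  shows "prob_space.indep_vars M (\<lambda>_. borel)
           (\<lambda>e \<omega>. flow_field S (\<lambda>e'. inp e' \<omega>) (\<lambda>y. xi y \<omega>) e) (outgoing S)
       \<and> (\<forall>e \<in> outgoing_asc S.
            distr M borel (\<lambda>\<omega>. flow_field S (\<lambda>e'. inp e' \<omega>) (\<lambda>y. xi y \<omega>) e) = \<pi>1)
       \<and> (\<forall>e \<in> outgoing_desc S.
            distr M borel (\<lambda>\<omega>. flow_field S (\<lambda>e'. inp e' \<omega>) (\<lambda>y. xi y \<omega>) e) = \<pi>2)"
proof -
  note A = assms
  interpret prob_space M by (rule A(12))
  define fl where "fl = (\<lambda>e \<omega>. flow_field S (\<lambda>e'. inp e' \<omega>) (\<lambda>y. xi y \<omega>) e)"
  define X where "X = (\<lambda>i \<omega>. case i of Inl e \<Rightarrow> fl e \<omega> | Inr y \<Rightarrow> xi y \<omega>)"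
  define Inv where "Inv = (\<lambda>P. indep_vars (\<lambda>_. borel) X (idx S P) \<and>
     (\<forall>e\<in>front S P. asc e \<longrightarrow> distr M borel (fl e) = \<pi>1) \<and>
     (\<forall>e\<in>front S P. \<not> asc e \<longrightarrow> distr M borel (fl e) = \<pi>2))"
  have finS: "finite S" using hex_props(1)[OF A(11)] .
  have inc_out: "fst e \<notin> S" if "e \<in> incoming S" for e
    using that unfolding incoming_def incoming_asc_def incoming_desc_def by auto
  have fl_inc: "fl e = inp e" if "e \<in> incoming S" for e
    unfolding fl_def using flow_field_out[OF inc_out[OF that]] by simp
  have base: "Inv {}"
  proof -
    have "indep_vars (\<lambda>_. borel) X (idx S {})"
    proof -
      have eq: "idx S {} = Inl ` incoming S \<union> Inr ` S" unfolding idx_def front_empty by simp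
      have Xeq: "X i = (case i of Inl e \<Rightarrow> inp e | Inr y \<Rightarrow> xi y)" if "i \<in> idx S {}" for i
        using that fl_inc unfolding X_def eq by auto
      show ?thesis using A(13) indep_vars_cong[OF eq Xeq refl] by simp
    qed
    moreover have "\<forall>e\<in>front S {}. asc e \<longrightarrow> distr M borel (fl e) = \<pi>1"
      using A(14) fl_inc incoming_asc_iff unfolding front_empty by auto
    moreover have "\<forall>e\<in>front S {}. \<not> asc e \<longrightarrow> distr M borel (fl e) = \<pi>2"
      using A(15) fl_inc incoming_desc_iff unfolding front_empty by auto
    ultimately show ?thesis unfolding Inv_def by blast
  qed
  have ind_step: "Inv P" if "dc S P" for P
    using that
  proof (induction "card P" arbitrary: P)
    case 0
    have "P \<subseteq> S" using 0 unfolding dc_def by simp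
    then have "P = {}" using 0 finS by (metis card_0_eq finite_subset)
    then show ?case using base by simp
  next
    case (Suc n)
    have PS: "P \<subseteq> S" using Suc.prems unfolding dc_def by simp
    have finP: "finite P" using PS finS finite_subset by blast
    have Pne: "P \<noteq> {}" using Suc.hyps by auto
    obtain y where yP: "y \<in> P" and ymax: "\<forall>z\<in>P. fst z \<le> fst y"
    proof -
      have "Max (fst ` P) \<in> fst ` P" using finP Pne by simp
      then obtain y where "y \<in> P" "fst y = Max (fst ` P)" by auto
      moreover have "\<forall>z\<in>P. fst z \<le> Max (fst ` P)" using finP by simp
      ultimately show ?thesis using that by auto
    qed
    obtain t x where y: "y = (t,x)" by (cases y)
    define P' where "P' = P - {(t,x)}"
    have cardP': "n = card P'" using Suc.hyps yP y finP unfolding P'_def by simp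
    have dcP: "\<And>t' x'. (t',x') \<in> P \<Longrightarrow> ((t'-1,x'-1) \<in> S \<longrightarrow> (t'-1,x'-1) \<in> P) \<and> ((t'-1,x'+1) \<in> S \<longrightarrow> (t'-1,x'+1) \<in> P)"
      using Suc.prems unfolding dc_def by blast
    have dcP': "dc S P'"
      unfolding dc_def P'_def
    proof (intro conjI allI impI)
      show "P - {(t, x)} \<subseteq> S" using PS by auto
    next
      fix t' x' assume h: "(t', x') \<in> P - {(t, x)}" "(t' - 1, x' - 1) \<in> S"
      have "t' \<le> t" using ymax h y by fastforce
      then show "(t' - 1, x' - 1) \<in> P - {(t, x)}" using dcP[of t' x'] h by auto
    next
      fix t' x' assume h: "(t', x') \<in> P - {(t, x)}" "(t' - 1, x' + 1) \<in> S"
      have "t' \<le> t" using ymax h y by fastforce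
      then show "(t' - 1, x' + 1) \<in> P - {(t, x)}" using dcP[of t' x'] h by auto
    qed
    have IH: "Inv P'" using Suc.hyps(1)[OF cardP' dcP'] .
    have P'S: "P' \<subseteq> S" using PS unfolding P'_def by auto
    have yS: "(t,x) \<in> S" "(t,x) \<notin> P'" using yP y PS unfolding P'_def by auto
    have pa: "(t-1,x-1) \<in> S \<Longrightarrow> (t-1,x-1) \<in> P'" using dcP[of t x] yP y unfolding P'_def by auto
    have pb: "(t-1,x+1) \<in> S \<Longrightarrow> (t-1,x+1) \<in> P'" using dcP[of t x] yP y unfolding P'_def by auto
    have na: "(t+1,x+1) \<notin> P'" using ymax y unfolding P'_def by fastforce
    have nb: "(t+1,x-1) \<notin> P'" using ymax y unfolding P'_def by fastforce
    note fs = front_step[OF P'S yS pa pb na nb]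
    have Peq: "P = insert (t,x) P'" using yP y unfolding P'_def by auto
    define ea where "ea = ((t-1,x-1),(t,x))"
    define eb where "eb = ((t-1,x+1),(t,x))"
    define ea' where "ea' = ((t,x),(t+1,x+1))"
    define eb' where "eb' = ((t,x),(t+1,x-1))"
    have asc_ea: "asc ea" "\<not> asc eb" "asc ea'" "\<not> asc eb'" unfolding asc_def ea_def eb_def ea'_def eb'_def by auto
    have IHi: "indep_vars (\<lambda>_. borel) X (idx S P')" using IH unfolding Inv_def by blast
    have la: "distr M borel (X (Inl ea)) = \<pi>1" using IH fs(1) asc_ea unfolding Inv_def X_def ea_def by auto
    have lb: "distr M borel (X (Inl eb)) = \<pi>2" using IH fs(2) asc_ea unfolding Inv_def X_def eb_def by auto
    have lc: "distr M borel (X (Inr (t,x))) = \<pi>3" using A(16) yS unfolding X_def by auto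
    have Xa: "X (Inl ea') = (\<lambda>\<omega>. X (Inr (t,x)) \<omega> + max 0 (X (Inl ea) \<omega> - X (Inl eb) \<omega>))"
      unfolding X_def fl_def ea'_def ea_def eb_def using flow_field_rec(1)[OF A(11) yS(1)] by simp
    have Xb: "X (Inl eb') = (\<lambda>\<omega>. X (Inr (t,x)) \<omega> + max 0 (X (Inl eb) \<omega> - X (Inl ea) \<omega>))"
      unfolding X_def fl_def eb'_def ea_def eb_def using flow_field_rec(2)[OF A(11) yS(1)] by simp
    have abc: "Inl ea \<in> idx S P'" "Inl eb \<in> idx S P'" "Inr (t,x) \<in> idx S P'"
      "Inl ea \<noteq> Inl eb" "Inl ea \<noteq> (Inr (t,x) :: edge + point)" "Inl eb \<noteq> (Inr (t,x) :: edge + point)"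
      using fs(1,2) yS unfolding idx_def ea_def eb_def by auto
    have new: "Inl ea' \<notin> idx S P' - {Inl ea, Inl eb, Inr (t,x)}" "Inl eb' \<notin> idx S P' - {Inl ea, Inl eb, Inr (t,x)}"
      "(Inl ea' :: edge + point) \<noteq> Inl eb'"
      using fs(3,4) unfolding idx_def ea'_def eb'_def by auto
    have res: "indep_vars (\<lambda>_. borel) X (idx S P' - {Inl ea, Inl eb, Inr (t,x)} \<union> {Inl ea', Inl eb'}) \<and>
        distr M borel (X (Inl ea')) = \<pi>1 \<and> distr M borel (X (Inl eb')) = \<pi>2"
      by (rule step[OF A(1-6) A(10) IHi idx_finite[OF finS P'S] abc new la lb lc _ Xa Xb]) simp
    have fronteq: "front S P = front S P' - {ea, eb} \<union> {ea', eb'}"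
      using fs(5) Peq unfolding ea_def eb_def ea'_def eb'_def by simp
    have idxeq: "idx S P = idx S P' - {Inl ea, Inl eb, Inr (t,x)} \<union> {Inl ea', Inl eb'}"
      unfolding idx_def fronteq using Peq by auto
    show ?case
      unfolding Inv_def
    proof (intro conjI)
      show "indep_vars (\<lambda>_. borel) X (idx S P)" using res idxeq by simp
      show "\<forall>e\<in>front S P. asc e \<longrightarrow> distr M borel (fl e) = \<pi>1"
        using res IH asc_ea unfolding fronteq Inv_def X_def by auto
      show "\<forall>e\<in>front S P. \<not> asc e \<longrightarrow> distr M borel (fl e) = \<pi>2"
        using res IH asc_ea unfolding fronteq Inv_def X_def by auto
    qed
  qed
  have "dc S S" unfolding dc_def by auto
  then have InvS: "Inv S" by (rule ind_step)
  have idxS: "idx S S = Inl ` outgoing S" unfolding idx_def front_full by simp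
  have finO: "finite (outgoing S)" using front_finite[OF finS, of S] front_full by simp
  have "indep_vars (\<lambda>_. borel) (\<lambda>e. X (Inl e)) (outgoing S)"
    using InvS idxS finO indep_vars_Inl unfolding Inv_def by auto
  then have i1: "indep_vars (\<lambda>_. borel) fl (outgoing S)" unfolding X_def by simp
  have i2: "\<forall>e \<in> outgoing_asc S. distr M borel (fl e) = \<pi>1"
    using InvS outgoing_asc_front unfolding Inv_def by blast
  have i3: "\<forall>e \<in> outgoing_desc S. distr M borel (fl e) = \<pi>2"
    using InvS outgoing_desc_front unfolding Inv_def by blast
  show ?thesis using i1 i2 i3 unfolding fl_def by simp
qed


end
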